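(* Let $G$ be a complete graph on an infinite vertex set, let $v\in V(G)$, and let $M$ be a perfect matching of $G-v$. Define $w(e)=0$ if $e\in M$ and $w(e)=1$ otherwise. Then there is no perfect matching $N$ of $G$ such that every perfect matching $N'$ of $G$ with $|N\setminus N'|,|N'\setminus N|<\infty$ satisfies $w[N'\setminus N]\ge w[N\setminus N']$.
   Context: A matching is perfect if every vertex is covered by it. For a set $F$ of edges, $w[F]:=\sum_{e\in F}w(e)$. *)

theory Defs
  imports Main
begin

definition complete_edges :: "'a set \<Rightarrow> 'a set set" where
  "complete_edges V = {{x, y} | x y. x \<in> V \<and> y \<in> V \<and> x \<noteq> y}"

definition matching :: "'a set \<Rightarrow> 'a set set \<Rightarrow> bool" where
  "matching V M \<longleftrightarrow> M \<subseteq> complete_edges V \<and> (\<forall>e\<in>M. \<forall>f\<in>M. e \<noteq> f \<longrightarrow> e \<inter> f = {})"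

definition perfect_matching :: "'a set \<Rightarrow> 'a set set \<Rightarrow> bool" where
  "perfect_matching V M \<longleftrightarrow> matching V M \<and> (\<forall>x\<in>V. \<exists>e\<in>M. x \<in> e)"

end

theory Submission
  imports Defs
begin

lemma edge_other:
  assumes "e \<in> complete_edges V" "x \<in> e"
  shows "\<exists>y. e = {x, y} \<and> y \<in> V \<and> x \<in> V \<and> y \<noteq> x"
  using assms unfolding complete_edges_def by auto

lemma pm_cover:
  assumes "perfect_matching V N" "x \<in> V"
  shows "\<exists>y. {x, y} \<in> N \<and> y \<in> V \<and> y \<noteq> x"
proof -
  from assms obtain e where e: "e \<in> N" "x \<in> e" unfolding perfect_matching_def by blast
  then have "e \<in> complete_edges V" using assms(1) unfolding perfect_matching_def matching_def by blast
  from edge_other[OF this e(2)] e show ?thesis by auto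
qed

lemma pm_disj:
  assumes "perfect_matching V N" "e \<in> N" "f \<in> N" "e \<noteq> f"
  shows "e \<inter> f = {}"
  using assms unfolding perfect_matching_def matching_def by blast

lemma setA: "S \<subseteq> N \<Longrightarrow> T \<inter> N = {} \<Longrightarrow> N - ((N - S) \<union> T) = S" by blast
lemma setB: "T \<inter> N = {} \<Longrightarrow> ((N - S) \<union> T) - N = T" by blast

theorem mainTheorem8:
  fixes V :: "'a set" and v :: 'a and M :: "'a set set" and w :: "'a set \<Rightarrow> nat"
  assumes "infinite V" and "v \<in> V" and "perfect_matching (V - {v}) M"
    and "\<And>e. w e = (if e \<in> M then 0 else 1)"
  shows "\<not> (\<exists>N. perfect_matching V N \<and>
            (\<forall>N'. perfect_matching V N' \<and> finite (N - N') \<and> finite (N' - N)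
                  \<longrightarrow> sum w (N' - N) \<ge> sum w (N - N')))"
proof
  assume "\<exists>N. perfect_matching V N \<and>
            (\<forall>N'. perfect_matching V N' \<and> finite (N - N') \<and> finite (N' - N)
                  \<longrightarrow> sum w (N' - N) \<ge> sum w (N - N'))"
  then obtain N where pN: "perfect_matching V N" and opt: "\<And>N'. perfect_matching V N' \<Longrightarrow> finite (N - N') \<Longrightarrow> finite (N' - N)
                  \<Longrightarrow> sum w (N' - N) \<ge> sum w (N - N')" by blast
  have Mv: "\<And>e. e \<in> M \<Longrightarrow> v \<notin> e" using assms(3) unfolding perfect_matching_def matching_def complete_edges_def by blast
  obtain x1 where 1: "{v, x1} \<in> N" "x1 \<in> V" "x1 \<noteq> v" using pm_cover[OF pN assms(2)] by blast
  obtain x2 where 2: "{x1, x2} \<in> M" "x2 \<in> V - {v}" "x2 \<noteq> x1" using pm_cover[OF assms(3), of x1] 1 by blast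
  obtain x3 where 3: "{x2, x3} \<in> N" "x3 \<in> V" "x3 \<noteq> x2" using pm_cover[OF pN, of x2] 2 by blast
  have x2v: "x2 \<noteq> v" using 2 by blast
  have ne: "{v, x1} \<noteq> {x2, x3}" using x2v 2(3) by (auto simp: doubleton_eq_iff)
  have dj: "{v, x1} \<inter> {x2, x3} = {}" using pm_disj[OF pN 1(1) 3(1) ne] .
  have x31: "x3 \<noteq> x1" using dj by auto
  have x3v: "x3 \<noteq> v" using dj by auto
  have e1M: "{v, x1} \<notin> M" using Mv by blast
  have e2M: "{x2, x3} \<notin> M"
  proof
    assume "{x2, x3} \<in> M"
    have "{x1,x2} = {x2,x3}" using pm_disj[OF assms(3) 2(1) \<open>{x2, x3} \<in> M\<close>] by blast
    then show False using x31 2(3) by (auto simp: doubleton_eq_iff)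
  qed
  have f1N: "{x1, x2} \<notin> N"
  proof
    assume h: "{x1, x2} \<in> N"
    have "{v, x1} \<noteq> {x1, x2}" using x2v 1(3) by (auto simp: doubleton_eq_iff)
    from pm_disj[OF pN 1(1) h this] show False by auto
  qed
  have f2N: "{v, x3} \<notin> N"
  proof
    assume h: "{v, x3} \<in> N"
    have "{v, x1} \<noteq> {v, x3}" using x31 by (auto simp: doubleton_eq_iff)
    from pm_disj[OF pN 1(1) h this] show False by auto
  qed
  have f2M: "{v, x3} \<notin> M" using Mv by blast
  define N' where "N' = (N - {{v,x1},{x2,x3}}) \<union> {{x1,x2},{v,x3}}"
  have A: "N - N' = {{v,x1},{x2,x3}}" unfolding N'_def
    by (rule setA) (use 1(1) 3(1) f1N f2N in auto)
  have B: "N' - N = {{x1,x2},{v,x3}}" unfolding N'_def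
    by (rule setB) (use f1N f2N in auto)
  have mem: "\<And>e. e \<in> N' \<longleftrightarrow> (e \<in> N - {{v,x1},{x2,x3}}) \<or> e = {x1,x2} \<or> e = {v,x3}"
    unfolding N'_def by blast
  have dN: "\<And>e f. e \<in> N \<Longrightarrow> f \<in> N \<Longrightarrow> e \<noteq> f \<Longrightarrow> e \<inter> f = {}" using pm_disj[OF pN] by blast
  have sub: "\<And>e. e \<in> N - {{v,x1},{x2,x3}} \<Longrightarrow> e \<inter> {v,x1,x2,x3} = {}"
  proof -
    fix e assume h: "e \<in> N - {{v,x1},{x2,x3}}"
    then have "e \<inter> {v,x1} = {}" using dN[of e "{v,x1}"] 1(1) by blast
    moreover have "e \<inter> {x2,x3} = {}" using h dN[of e "{x2,x3}"] 3(1) by blast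
    ultimately show "e \<inter> {v,x1,x2,x3} = {}" by blast
  qed
  have ff: "{x1,x2} \<inter> {v,x3} = {}" using x31 x2v 1(3) 3(3) by auto
  have CE: "N \<subseteq> complete_edges V" using pN unfolding perfect_matching_def matching_def by blast
  have c1: "{x1,x2} \<in> complete_edges V" unfolding complete_edges_def using 1(2) 2(2,3) by blast
  have c2: "{v,x3} \<in> complete_edges V" unfolding complete_edges_def using assms(2) 3(2) x3v by blast
  have pN': "perfect_matching V N'"
    unfolding perfect_matching_def matching_def
  proof (intro conjI ballI impI)
    show "N' \<subseteq> complete_edges V"
    proof
      fix e assume "e \<in> N'"
      then show "e \<in> complete_edges V" unfolding mem using CE c1 c2 by blast
    qed
  next
    fix e f assume e: "e \<in> N'" and f: "f \<in> N'" and ef: "e \<noteq> f"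
    show "e \<inter> f = {}"
    proof (cases "e \<in> N - {{v,x1},{x2,x3}}")
      case eN: True
      show ?thesis
      proof (cases "f \<in> N - {{v,x1},{x2,x3}}")
        case True then show ?thesis using eN ef dN by blast
      next
        case False
        then have "f = {x1,x2} \<or> f = {v,x3}" using f mem by blast
        then show ?thesis using sub[OF eN] by blast
      qed
    next
      case eF: False
      then have e': "e = {x1,x2} \<or> e = {v,x3}" using e mem by blast
      show ?thesis
      proof (cases "f \<in> N - {{v,x1},{x2,x3}}")
        case True then show ?thesis using e' sub[OF True] by blast
      next
        case False
        then have "f = {x1,x2} \<or> f = {v,x3}" using f mem by blast
        then show ?thesis using e' ef ff by blast
      qed
    qed
  next
    fix x assume x: "x \<in> V"
    then obtain e where e: "e \<in> N" "x \<in> e" using pN unfolding perfect_matching_def by blast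
    show "\<exists>e\<in>N'. x \<in> e"
    proof (cases "e \<in> N - {{v,x1},{x2,x3}}")
      case True then show ?thesis using e mem by blast
    next
      case False
      then have "x \<in> {v,x1,x2,x3}" using e by blast
      moreover have "{x1,x2} \<in> N'" "{v,x3} \<in> N'" using mem by blast+
      ultimately show ?thesis by blast
    qed
  qed
  have "sum w (N' - N) \<ge> sum w (N - N')" using opt[OF pN'] A B by simp
  moreover have "sum w (N - N') = 2"
    unfolding A using e1M e2M assms(4) ne by simp
  moreover have "sum w (N' - N) = 1"
  proof -
    have "{x1,x2} \<noteq> {v,x3}" using ff 2(3) by blast
    then show ?thesis unfolding B using 2(1) f2M assms(4) by simp
  qed
  ultimately show False by simp
qed

end
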